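(* Let $X\in\mathbb{R}^{n\times p}$, $Y\in\mathbb{R}^{n\times q}$, $\lambda>0$. Let $(\hat B,\hat S)$ be either (a) a minimizer over $B\in\mathbb{R}^{p\times q}$ and symmetric positive definite $S\in\mathbb{R}^{n\times n}$ of $\frac{1}{2nq}\operatorname{Tr}((Y-XB)^\top S^{-1}(Y-XB))+\frac{1}{2n}\operatorname{Tr}(S)+\lambda\|B\|_{2,1}$; or (b) for given $0<\sigma_{\min}<\sigma_{\max}$, a minimizer over $B\in\mathbb{R}^{p\times q}$ and symmetric $S$ with $\sigma_{\max}\mathrm{Id}_n\succeq S\succeq\sigma_{\min}\mathrm{Id}_n$ of $\frac{1}{2nq}\operatorname{Tr}((Y-XB)^\top S^{-1}(Y-XB))+\frac{\operatorname{Tr}S}{2n}+\lambda\|B\|_{2,1}$. Let $\hat E=Y-X\hat B$. Then $$\|X^\top\hat E\|_{2,\infty}\le\|\hat S\|_2\,\|X^\top\hat S^{-1}\hat E\|_{2,\infty}.$$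
   Context: $\|M\|_{2,\infty}=\max_j\|M_{j:}\|_2$ is the maximum Euclidean norm of the rows of $M$; $\|\cdot\|_2$ is the operator (spectral) norm; $\succeq$ is the Loewner order. *)

theory Defs
  imports "HOL-Analysis.Analysis"
begin

text \<open>Matrices M :: real^'c^'r are r x c; row j is M $ j (a vector in real^'c, Euclidean norm).\<close>

definition norm21 :: "real^'c^'r \<Rightarrow> real" where
  "norm21 M = (\<Sum>j\<in>UNIV. norm (M $ j))"

definition norm2inf :: "real^'c^'r \<Rightarrow> real" where
  "norm2inf M = Max ((\<lambda>j. norm (M $ j)) ` UNIV)"

text \<open>Spectral norm: operator norm w.r.t. Euclidean norms.\<close>
definition opnorm2 :: "real^'c^'r \<Rightarrow> real" where
  "opnorm2 M = onorm (\<lambda>x. M *v x)"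

definition symmetric_mat :: "real^'n^'n \<Rightarrow> bool" where
  "symmetric_mat S \<longleftrightarrow> transpose S = S"

definition pos_def :: "real^'n^'n \<Rightarrow> bool" where
  "pos_def S \<longleftrightarrow> symmetric_mat S \<and> (\<forall>x. x \<noteq> 0 \<longrightarrow> x \<bullet> (S *v x) > 0)"

text \<open>Loewner order: A \<succeq> B iff A - B is positive semidefinite (for symmetric A, B).\<close>
definition loewner_ge :: "real^'n^'n \<Rightarrow> real^'n^'n \<Rightarrow> bool" where
  "loewner_ge A B \<longleftrightarrow> (\<forall>x. x \<bullet> ((A - B) *v x) \<ge> 0)"

definition objective ::
  "real \<Rightarrow> real^'p^'n \<Rightarrow> real^'q^'n \<Rightarrow> real^'q^'p \<Rightarrow> real^'n^'n \<Rightarrow> real" where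
  "objective lam X Y B S =
     trace (transpose (Y - X ** B) ** matrix_inv S ** (Y - X ** B)) / (2 * real CARD('n) * real CARD('q))
     + trace S / (2 * real CARD('n)) + lam * norm21 B"

definition feasible_a :: "real^'n^'n \<Rightarrow> bool" where
  "feasible_a S \<longleftrightarrow> pos_def S"

definition feasible_b :: "real \<Rightarrow> real \<Rightarrow> real^'n^'n \<Rightarrow> bool" where
  "feasible_b smin smax S \<longleftrightarrow> symmetric_mat S \<and>
     loewner_ge (smax *\<^sub>R mat 1) S \<and> loewner_ge S (smin *\<^sub>R mat 1)"

end

theory Submission
  imports Defs
begin

definition Em :: "'n \<Rightarrow> 'n \<Rightarrow> real^'n^'n" where
  "Em i j = (\<chi> r c. if r = i \<and> c = j then 1 else 0)"

lemma Em_mult: "Em a b ** Em c d = (if b = c then Em a d else 0)"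
proof -
  have "(\<Sum>k\<in>UNIV. (if r = a \<and> k = b then 1 else 0) * (if k = c \<and> s = d then 1 else (0::real)))
        = (if b = c \<and> r = a \<and> s = d then 1 else 0)" for r s
  proof -
    have "(\<Sum>k\<in>UNIV. (if r = a \<and> k = b then 1 else 0) * (if k = c \<and> s = d then 1 else (0::real)))
       = (\<Sum>k\<in>UNIV. if k = b then (if b = c \<and> r = a \<and> s = d then 1 else 0) else 0)"
      by (rule sum.cong) auto
    also have "\<dots> = (if b = c \<and> r = a \<and> s = d then 1 else 0)" by (simp add: sum.delta)
    finally show ?thesis .
  qed
  then show ?thesis
    unfolding Em_def matrix_matrix_mult_def by (auto simp: vec_eq_iff)
qed

lemma Em_transpose: "transpose (Em a b) = Em b a"
  unfolding Em_def transpose_def by (auto simp: vec_eq_iff)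

lemma sum_delta2: "(\<Sum>i\<in>UNIV. \<Sum>k\<in>UNIV. if i = (a::'m::finite) \<and> k = (b::'n::finite) then (x::real) else 0) = x"
proof -
  have "\<And>i. (\<Sum>k\<in>UNIV. if i = a \<and> k = b then x else 0) = (if i = a then x else 0)"
    by (cases "i = a") (simp_all add: sum.delta)
  then show ?thesis by simp
qed

lemma trace_Em_mult: "trace (Em a b ** M) = M $ b $ a"
  unfolding Em_def trace_def matrix_matrix_mult_def
  by (simp add: if_distrib if_distribR sum_delta2 cong: if_cong)

lemma matrix_sub_ldistrib: "(A::real^'n^'m) ** (B - C) = A ** B - A ** C"
  by (simp add: matrix_matrix_mult_def vec_eq_iff sum_subtractf algebra_simps)
lemma matrix_sub_rdistrib: "((B::real^'n^'m) - C) ** A = B ** A - C ** A"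
  by (simp add: matrix_matrix_mult_def vec_eq_iff sum_subtractf algebra_simps)
lemma matrix_add_rdistrib': "((B::real^'n^'m) + C) ** A = B ** A + C ** A"
  by (simp add: matrix_matrix_mult_def vec_eq_iff sum.distrib algebra_simps)
lemma transpose_add: "transpose ((A::real^'n^'m) + B) = transpose A + transpose B"
  by (simp add: transpose_def vec_eq_iff)
lemma transpose_minus: "transpose (- (A::real^'n^'m)) = - transpose A"
  by (simp add: transpose_def vec_eq_iff)
lemma transpose_diff: "transpose ((A::real^'n^'m) - B) = transpose A - transpose B"
  by (simp add: transpose_def vec_eq_iff)
lemma trace_scaleR: "trace (k *\<^sub>R (A::real^'n^'n)) = k * trace A"
  by (simp add: trace_def sum_distrib_left)
lemma matrix_scaleR_right: "(A::real^'n^'m) ** (k *\<^sub>R B) = k *\<^sub>R (A ** B)"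
  by (simp add: matrix_scalar_ac scalar_matrix_assoc)
lemma matrix_scaleR_left: "(k *\<^sub>R (A::real^'n^'m)) ** B = k *\<^sub>R (A ** B)"
  by (simp add: scalar_matrix_assoc)

locale givens =
  fixes U K :: "real^'n^'n"
  assumes UU: "U ** U = U" and UK: "U ** K = K" and KU: "K ** U = K" and KK: "K ** K = - U"
    and Ut: "transpose U = U" and Kt: "transpose K = - K"
begin

definition gR :: "real \<Rightarrow> real \<Rightarrow> real \<Rightarrow> real^'n^'n" where
  "gR a b c = a *\<^sub>R mat 1 + b *\<^sub>R U + c *\<^sub>R K"

lemma gR_mult: "gR a b c ** gR a' b' c' = gR (a*a') (a*b' + b*a' + b*b' - c*c') (a*c' + c*a' + b*c' + c*b')"
  unfolding gR_def
  by (simp add: matrix_add_ldistrib matrix_add_rdistrib' matrix_scaleR_right matrix_scaleR_left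
      UU UK KU KK algebra_simps scaleR_add_left)

lemma gR_transpose: "transpose (gR a b c) = gR a b (-c)"
  unfolding gR_def
  by (simp add: transpose_add transpose_scalar Ut Kt transpose_minus)


lemma gR_bilin:
  "trace (gR a b c ** P ** gR a' b' c' ** A) =
     a*a' * trace (P ** A) + a*b' * trace (P ** U ** A) + a*c' * trace (P ** K ** A)
   + b*a' * trace (U ** P ** A) + b*b' * trace (U ** P ** U ** A) + b*c' * trace (U ** P ** K ** A)
   + c*a' * trace (K ** P ** A) + c*b' * trace (K ** P ** U ** A) + c*c' * trace (K ** P ** K ** A)"
  unfolding gR_def
  by (simp add: matrix_add_ldistrib matrix_add_rdistrib' matrix_scaleR_right matrix_scaleR_left
      trace_add trace_scaleR algebra_simps)

end

lemma matrix_inv_eq: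
  fixes A B :: "real^'n^'n"
  assumes "A ** B = mat 1"
  shows "matrix_inv A = B"
proof -
  have BA: "B ** A = mat 1" using assms matrix_left_right_inverse by blast
  have ex: "A ** B = mat 1 \<and> B ** A = mat 1" using assms BA by blast
  have "A ** matrix_inv A = mat 1 \<and> matrix_inv A ** A = mat 1"
    unfolding matrix_inv_def by (rule someI[of _ B]) (rule ex)
  then have "matrix_inv A ** A = mat 1" by blast
  then have "matrix_inv A ** (A ** B) = B" by (simp add: matrix_mul_assoc)
  then show ?thesis using assms by simp
qed

lemma inner_matrix_transpose: "inner (x::real^'n) ((M::real^'m^'n) *v y) = inner (transpose M *v x) y"
  by (simp add: dot_lmul_matrix)

lemma orth_quad:
  fixes Q M :: "real^'n^'n"
  shows "inner x ((Q ** M ** transpose Q) *v x) = inner (transpose Q *v x) (M *v (transpose Q *v x))"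
  by (simp del: transpose_matrix_vector add: inner_matrix_transpose[symmetric] matrix_vector_mul_assoc[symmetric])

lemma orth_conj_diff1:
  fixes Q M :: "real^'n^'n"
  assumes "Q ** transpose Q = mat 1"
  shows "c *\<^sub>R mat 1 - Q ** M ** transpose Q = Q ** (c *\<^sub>R mat 1 - M) ** transpose Q"
  using assms by (simp add: matrix_sub_ldistrib matrix_sub_rdistrib matrix_scaleR_right matrix_scaleR_left)

lemma orth_conj_diff2:
  fixes Q M :: "real^'n^'n"
  assumes "Q ** transpose Q = mat 1"
  shows "Q ** M ** transpose Q - c *\<^sub>R mat 1 = Q ** (M - c *\<^sub>R mat 1) ** transpose Q"
  using assms by (simp add: matrix_sub_ldistrib matrix_sub_rdistrib matrix_scaleR_right matrix_scaleR_left)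

lemma orth_sym:
  fixes Q M :: "real^'n^'n"
  assumes "symmetric_mat M"
  shows "symmetric_mat (Q ** M ** transpose Q)"
  using assms unfolding symmetric_mat_def by (simp add: matrix_transpose_mul matrix_mul_assoc)

lemma orth_nz:
  fixes Q :: "real^'n^'n"
  assumes "Q ** transpose Q = mat 1" "x \<noteq> 0"
  shows "transpose Q *v x \<noteq> 0"
proof
  assume "transpose Q *v x = 0"
  then have "Q *v (transpose Q *v x) = 0" by (simp del: transpose_matrix_vector)
  then show False using assms by (simp del: transpose_matrix_vector add: matrix_vector_mul_assoc)
qed

lemma orth_feasible_a:
  fixes Q S :: "real^'n^'n"
  assumes "Q ** transpose Q = mat 1" "feasible_a S"
  shows "feasible_a (Q ** S ** transpose Q)"
  using assms unfolding feasible_a_def pos_def_def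
  by (metis orth_sym orth_quad orth_nz)

lemma orth_feasible_b:
  fixes Q S :: "real^'n^'n"
  assumes "Q ** transpose Q = mat 1" "feasible_b l u S"
  shows "feasible_b l u (Q ** S ** transpose Q)"
  using assms unfolding feasible_b_def loewner_ge_def
  by (auto simp: orth_sym orth_conj_diff1 orth_conj_diff2 orth_quad)


lemma transpose_sub_Em: "transpose (Em j i - Em i j) = - (Em j i - Em i j)"
  by (simp add: transpose_diff Em_transpose)

lemma commute_from_min:
  fixes P A :: "real^'n^'n"
  assumes Pt: "transpose P = P" and At: "transpose A = A"
    and min: "\<And>Q. Q ** transpose Q = mat 1 \<Longrightarrow> trace (P ** A) \<le> trace (Q ** P ** transpose Q ** A)"
  shows "P ** A = A ** P"
proof -
  have key: "(P ** A) $ i $ j = (P ** A) $ j $ i" for i j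
  proof (cases "i = j")
    case True then show ?thesis by simp
  next
    case False
    then have ji: "j \<noteq> i" by simp
    define U where "U = Em i i + Em j j"
    define K where "K = Em j i - Em i j"
    interpret g: givens U K
    proof
      show "U ** U = U" unfolding U_def
        by (simp add: matrix_add_ldistrib matrix_add_rdistrib' Em_mult False ji)
      show "U ** K = K" unfolding U_def K_def
        by (simp add: matrix_add_rdistrib' matrix_sub_ldistrib Em_mult False ji)
      show "K ** U = K" unfolding U_def K_def
        by (simp add: matrix_add_ldistrib matrix_sub_rdistrib Em_mult False ji)
      show "K ** K = - U" unfolding U_def K_def
        by (simp add: matrix_sub_ldistrib matrix_sub_rdistrib Em_mult False ji)
      show "transpose U = U" unfolding U_def
        by (simp add: transpose_add Em_transpose)
      show "transpose K = - K" unfolding K_def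
        by (simp add: transpose_diff Em_transpose)
    qed
    define T0 where "T0 = trace (P ** A)"
    define f where "f = (\<lambda>t::real.
        (1+t^2)*(1+t^2) * T0 + (1+t^2)*(-2*t^2) * trace (P ** U ** A) + (1+t^2)*(-(2*t)) * trace (P ** K ** A)
      + (-2*t^2)*(1+t^2) * trace (U ** P ** A) + (-2*t^2)*(-2*t^2) * trace (U ** P ** U ** A)
      + (-2*t^2)*(-(2*t)) * trace (U ** P ** K ** A)
      + (2*t)*(1+t^2) * trace (K ** P ** A) + (2*t)*(-2*t^2) * trace (K ** P ** U ** A)
      + (2*t)*(-(2*t)) * trace (K ** P ** K ** A) - (1+t^2)^2 * T0)"
    have fpos: "f 0 \<le> f t" for t
    proof -
      define a where "a = 1 + t^2"
      have apos: "a > 0" unfolding a_def by (simp add: add_pos_nonneg)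
      define R where "R = g.gR a (-2*t^2) (2*t)"
      have Rt: "transpose R = g.gR a (-2*t^2) (-(2*t))"
        unfolding R_def by (simp add: g.gR_transpose)
      have RR: "R ** transpose R = (a*a) *\<^sub>R mat 1"
        unfolding Rt unfolding R_def g.gR_mult
        by (simp add: g.gR_def a_def algebra_simps power2_eq_square)
      define Q where "Q = (1/a) *\<^sub>R R"
      have QQ: "Q ** transpose Q = mat 1"
        unfolding Q_def using apos
        by (simp add: transpose_scalar matrix_scaleR_left matrix_scaleR_right RR)
      have "trace (P ** A) \<le> trace (Q ** P ** transpose Q ** A)" by (rule min[OF QQ])
      also have "\<dots> = (1/a)^2 * trace (R ** P ** transpose R ** A)"
        unfolding Q_def by (simp add: transpose_scalar matrix_scaleR_left matrix_scaleR_right trace_scaleR power2_eq_square)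
      finally have "a^2 * trace (P ** A) \<le> trace (R ** P ** transpose R ** A)"
        using apos by (simp add: field_simps)
      then have "a^2 * T0 \<le> trace (R ** P ** transpose R ** A)" unfolding T0_def .
      then show ?thesis unfolding f_def unfolding Rt unfolding R_def g.gR_bilin a_def
        by (simp add: T0_def)
    qed
    have Df: "DERIV f 0 :> 2 * (trace (K ** P ** A) - trace (P ** K ** A))"
      unfolding f_def
      by (rule derivative_eq_intros refl | simp)+
    have d0: "2 * (trace (K ** P ** A) - trace (P ** K ** A)) = 0"
      using DERIV_local_min[OF Df, of 1] fpos by auto
    have AP: "A ** P = transpose (P ** A)" by (simp add: matrix_transpose_mul Pt At)
    have t1: "trace (K ** P ** A) = (P ** A) $ i $ j - (P ** A) $ j $ i"
      unfolding K_def by (simp add: matrix_mul_assoc[symmetric] matrix_sub_rdistrib trace_sub trace_Em_mult)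
    have t2: "trace (P ** K ** A) = (P ** A) $ j $ i - (P ** A) $ i $ j"
    proof -
      have "trace (P ** K ** A) = trace (K ** (A ** P))"
        by (metis matrix_mul_assoc trace_mul_sym)
      also have "\<dots> = (A ** P) $ i $ j - (A ** P) $ j $ i"
        unfolding K_def by (simp add: matrix_sub_rdistrib trace_sub trace_Em_mult)
      finally show ?thesis unfolding AP by (simp add: transpose_def)
    qed
    show ?thesis using d0 t1 t2 by simp
  qed
  have "P ** A = transpose (P ** A)" using key by (simp add: transpose_def vec_eq_iff)
  also have "\<dots> = A ** P" by (simp add: matrix_transpose_mul Pt At)
  finally show ?thesis .
qed


lemma inner_EEt:
  fixes E :: "real^'q^'n"
  shows "inner (transpose E *v u) (transpose E *v z) = inner u ((E ** transpose E) *v z)"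
  using inner_matrix_transpose[of u E "transpose E *v z"]
  by (simp del: transpose_matrix_vector add: matrix_vector_mul_assoc)

lemma seminorm_bound:
  fixes S :: "real^'n^'n" and E :: "real^'q^'n"
  assumes St: "transpose S = S" and comm: "S ** (E ** transpose E) = (E ** transpose E) ** S"
  shows "norm (transpose E *v (S *v y)) \<le> onorm (\<lambda>x. S *v x) * norm (transpose E *v y)"
proof -
  define A where "A = E ** transpose E"
  define F where "F = (\<lambda>v. transpose E *v v)"
  define c where "c = onorm (\<lambda>x. S *v x)"
  define C where "C = onorm F"
  define v where "v = (\<lambda>k. ((\<lambda>x. S *v x) ^^ k) y)"
  define n where "n = (\<lambda>k. norm (F (v k)))"
  have vS: "v (Suc k) = S *v v k" for k unfolding v_def by simp
  have blS: "bounded_linear (\<lambda>x. S *v x)" by simp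
  have blF: "bounded_linear F" unfolding F_def by simp
  have c0: "c \<ge> 0" unfolding c_def by (rule onorm_pos_le[OF blS])
  have C0: "C \<ge> 0" unfolding C_def by (rule onorm_pos_le[OF blF])
  have Sx: "norm (S *v x) \<le> c * norm x" for x unfolding c_def by (rule onorm[OF blS])
  have Fx: "norm (F x) \<le> C * norm x" for x unfolding C_def by (rule onorm[OF blF])
  have vb: "norm (v k) \<le> c^k * norm y" for k
  proof (induction k)
    case 0 then show ?case by (simp add: v_def)
  next
    case (Suc k)
    have "norm (v (Suc k)) \<le> c * norm (v k)" unfolding vS by (rule Sx)
    also have "\<dots> \<le> c * (c^k * norm y)" by (rule mult_left_mono[OF Suc.IH c0])
    finally show ?case by simp
  qed
  have nb: "n k \<le> C * (c^k * norm y)" for k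
  proof -
    have "n k \<le> C * norm (v k)" unfolding n_def by (rule Fx)
    also have "\<dots> \<le> C * (c^k * norm y)" by (rule mult_left_mono[OF vb C0])
    finally show ?thesis .
  qed
  have SAS: "S ** A ** S = A ** S ** S" using comm unfolding A_def by simp
  have ident: "inner (F (S *v w)) (F (S *v w)) = inner (F w) (F (S *v (S *v w)))" for w
  proof -
    have "inner (F (S *v w)) (F (S *v w)) = inner (S *v w) (A *v (S *v w))"
      unfolding F_def A_def by (rule inner_EEt)
    also have "\<dots> = inner w (transpose S *v (A *v (S *v w)))"
      by (simp del: transpose_matrix_vector add: inner_matrix_transpose)
    also have "\<dots> = inner w ((S ** A ** S) *v w)"
      using St by (simp del: transpose_matrix_vector add: matrix_vector_mul_assoc matrix_mul_assoc)
    also have "\<dots> = inner w (A *v (S *v (S *v w)))"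
      unfolding SAS by (simp del: transpose_matrix_vector add: matrix_vector_mul_assoc matrix_mul_assoc)
    also have "\<dots> = inner (F w) (F (S *v (S *v w)))"
      unfolding F_def A_def by (rule inner_EEt[symmetric])
    finally show ?thesis .
  qed
  have lc: "n (Suc k) ^ 2 \<le> n k * n (Suc (Suc k))" for k
  proof -
    have "n (Suc k) ^ 2 = inner (F (S *v v k)) (F (S *v v k))"
      unfolding n_def vS by (simp add: power2_norm_eq_inner)
    also have "\<dots> = inner (F (v k)) (F (S *v (S *v v k)))" by (rule ident)
    also have "\<dots> \<le> n k * n (Suc (Suc k))"
      unfolding n_def vS by (rule norm_cauchy_schwarz)
    finally show ?thesis .
  qed
  have n0: "n k \<ge> 0" for k unfolding n_def by simp
  show ?thesis
  proof (rule ccontr)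
    assume "\<not> ?thesis"
    then have gt: "n 1 > c * n 0" unfolding n_def v_def F_def c_def by simp
    have n1pos: "n 1 > 0" using gt c0 n0[of 0] by (meson le_less_trans mult_nonneg_nonneg)
    have n0pos: "n 0 > 0"
    proof (rule ccontr)
      assume "\<not> n 0 > 0"
      then have "n 0 = 0" using n0[of 0] by simp
      then have "n 1 ^ 2 \<le> 0" using lc[of 0] by simp
      then show False using n1pos by simp
    qed
    define r where "r = n 1 / n 0"
    have rc: "r > c" unfolding r_def using gt n0pos by (simp add: field_simps)
    have rpos: "r > 0" using rc c0 by simp
    have step: "n (Suc k) \<ge> r * n k \<and> n k > 0" for k
    proof (induction k)
      case 0 then show ?case using n0pos unfolding r_def by simp
    next
      case (Suc k)
      then have nk: "n k > 0" and rk: "n (Suc k) \<ge> r * n k" by auto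
      have nsk: "n (Suc k) > 0" using rk rpos nk by (meson less_le_trans mult_pos_pos)
      have "r * n (Suc k) * n k \<le> n (Suc k) * n (Suc k)"
        using rk nsk by (simp add: mult.commute mult_left_mono)
      also have "\<dots> \<le> n k * n (Suc (Suc k))" using lc[of k] by (simp add: power2_eq_square)
      finally have "r * n (Suc k) * n k \<le> n (Suc (Suc k)) * n k" by (simp add: mult.commute)
      then have "r * n (Suc k) \<le> n (Suc (Suc k))" using nk by simp
      then show ?case using nsk by simp
    qed
    have geo: "r^k * n 0 \<le> n k" for k
    proof (induction k)
      case 0 then show ?case by simp
    next
      case (Suc k)
      have "r^Suc k * n 0 = r * (r^k * n 0)" by simp
      also have "\<dots> \<le> r * n k" using Suc rpos by simp
      also have "\<dots> \<le> n (Suc k)" using step[of k] by simp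
      finally show ?case .
    qed
    show False
    proof (cases "c = 0")
      case True
      then have "n 1 \<le> 0" using nb[of 1] by simp
      then show False using n1pos by simp
    next
      case False
      then have cpos: "c > 0" using c0 by simp
      have "1 < r / c" using rc cpos by simp
      then obtain k where k: "C * norm y / n 0 < (r / c)^k" using real_arch_pow by blast
      have "r^k * n 0 \<le> C * (c^k * norm y)" using geo[of k] nb[of k] by linarith
      then have "(r/c)^k * n 0 \<le> C * norm y"
        using cpos by (simp add: power_divide field_simps)
      then have "(r/c)^k \<le> C * norm y / n 0" using n0pos by (simp add: field_simps)
      then show False using k by simp
    qed
  qed
qed


lemma row_transpose_mult:
  fixes M :: "real^'p^'n" and E :: "real^'q^'n"
  shows "(transpose M ** E) $ j = transpose E *v column j M"
  by (simp del: transpose_matrix_vector add: vec_eq_iff matrix_matrix_mult_def matrix_vector_mult_def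
      transpose_def column_def mult.commute)

lemma column_mult:
  fixes P :: "real^'n^'n" and M :: "real^'p^'n"
  shows "column j (P ** M) = P *v column j M"
  by (simp add: vec_eq_iff matrix_matrix_mult_def matrix_vector_mult_def column_def)

lemma trace_sandwich:
  fixes E :: "real^'q^'n" and M :: "real^'n^'n"
  shows "trace (transpose E ** M ** E) = trace (M ** (E ** transpose E))"
proof -
  have "trace (transpose E ** M ** E) = trace (E ** (transpose E ** M))"
    by (rule trace_mul_sym)
  also have "\<dots> = trace ((E ** transpose E) ** M)" by (simp add: matrix_mul_assoc)
  also have "\<dots> = trace (M ** (E ** transpose E))" by (rule trace_mul_sym)
  finally show ?thesis .
qed

lemma Max_scale_le:
  fixes f g :: "'j::finite \<Rightarrow> real"
  assumes "\<And>j. f j \<le> c * g j" "c \<ge> 0"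
  shows "Max (f ` UNIV) \<le> c * Max (g ` UNIV)"
proof (rule Max.boundedI)
  show "finite (f ` UNIV)" by simp
  show "f ` UNIV \<noteq> {}" by simp
  fix a assume "a \<in> f ` UNIV"
  then obtain j where j: "a = f j" by blast
  have "g j \<le> Max (g ` UNIV)" by (rule Max_ge) auto
  then have "c * g j \<le> c * Max (g ` UNIV)" using assms(2) by (rule mult_left_mono)
  then show "a \<le> c * Max (g ` UNIV)" using assms(1)[of j] j by linarith
qed

lemma scaled_id_mult: "(c *\<^sub>R mat 1) *v (x::real^'n) = c *\<^sub>R x"
proof -
  have "(c *\<^sub>R mat 1) *v x = c *\<^sub>R (mat 1 *v x)"
    by (simp add: vec_eq_iff matrix_vector_mult_def sum_distrib_left mult.assoc)
  then show ?thesis by simp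
qed

theorem lemma3:
  fixes X :: "real^'p^'n" and Y :: "real^'q^'n" and lam :: real
    and Bh :: "real^'q^'p" and Sh :: "real^'n^'n"
  assumes lam: "lam > 0"
    and minimizer:
      "(feasible_a Sh \<and>
          (\<forall>B S. feasible_a S \<longrightarrow> objective lam X Y Bh Sh \<le> objective lam X Y B S))
       \<or> (\<exists>smin smax. 0 < smin \<and> smin < smax \<and> feasible_b smin smax Sh \<and>
          (\<forall>B S. feasible_b smin smax S \<longrightarrow> objective lam X Y Bh Sh \<le> objective lam X Y B S))"
  shows "norm2inf (transpose X ** (Y - X ** Bh))
           \<le> opnorm2 Sh * norm2inf (transpose X ** matrix_inv Sh ** (Y - X ** Bh))"
proof -
  define E where "E = Y - X ** Bh"
  define A where "A = E ** transpose E"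
  have props: "symmetric_mat Sh \<and> (\<forall>x. x \<noteq> 0 \<longrightarrow> 0 < inner x (Sh *v x)) \<and>
      (\<forall>Q. Q ** transpose Q = mat 1 \<longrightarrow> objective lam X Y Bh Sh \<le> objective lam X Y Bh (Q ** Sh ** transpose Q))"
    using minimizer
  proof
    assume a: "feasible_a Sh \<and> (\<forall>B S. feasible_a S \<longrightarrow> objective lam X Y Bh Sh \<le> objective lam X Y B S)"
    then show ?thesis using orth_feasible_a unfolding feasible_a_def pos_def_def by blast
  next
    assume "\<exists>smin smax. 0 < smin \<and> smin < smax \<and> feasible_b smin smax Sh \<and>
          (\<forall>B S. feasible_b smin smax S \<longrightarrow> objective lam X Y Bh Sh \<le> objective lam X Y B S)"
    then obtain smin smax where s0: "0 < smin" and fb: "feasible_b smin smax Sh"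
      and mn: "\<forall>B S. feasible_b smin smax S \<longrightarrow> objective lam X Y Bh Sh \<le> objective lam X Y B S"
      by blast
    have pd: "0 < inner x (Sh *v x)" if "x \<noteq> 0" for x
    proof -
      have "0 \<le> inner x ((Sh - smin *\<^sub>R mat 1) *v x)"
        using fb unfolding feasible_b_def loewner_ge_def by blast
      also have "\<dots> = inner x (Sh *v x) - smin * inner x x"
        by (simp add: matrix_vector_mult_diff_rdistrib inner_diff_right scaled_id_mult)
      finally have "smin * inner x x \<le> inner x (Sh *v x)" by simp
      moreover have "0 < smin * inner x x" using s0 that by simp
      ultimately show ?thesis by linarith
    qed
    have sy: "symmetric_mat Sh" using fb unfolding feasible_b_def by blast
    have "\<forall>Q. Q ** transpose Q = mat 1 \<longrightarrow> objective lam X Y Bh Sh \<le> objective lam X Y Bh (Q ** Sh ** transpose Q)"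
      using mn orth_feasible_b[OF _ fb] by blast
    then show ?thesis using sy pd by blast
  qed
  then have Ssym: "transpose Sh = Sh" and Spd: "\<And>x. x \<noteq> 0 \<Longrightarrow> 0 < inner x (Sh *v x)"
    and Smin: "\<And>Q. Q ** transpose Q = mat 1 \<Longrightarrow> objective lam X Y Bh Sh \<le> objective lam X Y Bh (Q ** Sh ** transpose Q)"
    unfolding symmetric_mat_def by blast+
  have "\<forall>x. Sh *v x = 0 \<longrightarrow> x = 0"
    using Spd by (metis inner_zero_right less_irrefl)
  then obtain B where "B ** Sh = mat 1" using matrix_left_invertible_ker by blast
  then have SB: "Sh ** B = mat 1" using matrix_left_right_inverse by blast
  define P where "P = matrix_inv Sh"
  have PB: "P = B" unfolding P_def by (rule matrix_inv_eq[OF SB])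
  have SP: "Sh ** P = mat 1" using SB PB by simp
  have PS: "P ** Sh = mat 1" using SP matrix_left_right_inverse by blast
  have Pt: "transpose P = P"
  proof -
    have "transpose P ** Sh = mat 1"
      using arg_cong[OF SP, of transpose] Ssym by (simp add: matrix_transpose_mul)
    then have "transpose P ** (Sh ** P) = P" by (simp add: matrix_mul_assoc)
    then show ?thesis using SP by simp
  qed
  have At: "transpose A = A" unfolding A_def by (simp add: matrix_transpose_mul)
  have npos: "(0::real) < 2 * real CARD('n) * real CARD('q)" by simp
  have trmin: "trace (P ** A) \<le> trace (Q ** P ** transpose Q ** A)" if Q: "Q ** transpose Q = mat 1" for Q
  proof -
    have QtQ: "transpose Q ** Q = mat 1" using Q matrix_left_right_inverse by blast
    have inv: "matrix_inv (Q ** Sh ** transpose Q) = Q ** P ** transpose Q"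
    proof (rule matrix_inv_eq)
      have "Q ** Sh ** transpose Q ** (Q ** P ** transpose Q) = Q ** Sh ** (transpose Q ** Q) ** P ** transpose Q"
        by (simp add: matrix_mul_assoc)
      also have "\<dots> = mat 1" using QtQ by (simp add: matrix_mul_assoc[symmetric] SP Q)
      finally show "Q ** Sh ** transpose Q ** (Q ** P ** transpose Q) = mat 1" .
    qed
    have trS: "trace (Q ** Sh ** transpose Q) = trace Sh"
    proof -
      have "trace (Q ** Sh ** transpose Q) = trace (Q ** (Sh ** transpose Q))" by (simp add: matrix_mul_assoc)
      also have "\<dots> = trace ((Sh ** transpose Q) ** Q)" by (rule trace_mul_sym)
      also have "\<dots> = trace Sh" using QtQ by (simp add: matrix_mul_assoc[symmetric])
      finally show ?thesis .
    qed
    have "objective lam X Y Bh Sh \<le> objective lam X Y Bh (Q ** Sh ** transpose Q)" by (rule Smin[OF Q])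
    then have "trace (transpose E ** P ** E) / (2 * real CARD('n) * real CARD('q))
        \<le> trace (transpose E ** (Q ** P ** transpose Q) ** E) / (2 * real CARD('n) * real CARD('q))"
      unfolding objective_def inv trS E_def P_def by simp
    then have "trace (transpose E ** P ** E) \<le> trace (transpose E ** (Q ** P ** transpose Q) ** E)"
      using npos by (simp add: divide_le_cancel)
    then show ?thesis unfolding trace_sandwich A_def by (simp add: matrix_mul_assoc)
  qed
  have PA: "P ** A = A ** P" by (rule commute_from_min[OF Pt At trmin])
  have SA: "Sh ** A = A ** Sh"
  proof -
    have "Sh ** A = Sh ** A ** (P ** Sh)" using PS by simp
    also have "\<dots> = Sh ** (A ** P) ** Sh" by (simp add: matrix_mul_assoc)
    also have "\<dots> = Sh ** (P ** A) ** Sh" using PA by simp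
    also have "\<dots> = (Sh ** P) ** A ** Sh" by (simp add: matrix_mul_assoc)
    also have "\<dots> = A ** Sh" using SP by simp
    finally show ?thesis .
  qed
  have rowbound: "norm ((transpose X ** E) $ j) \<le> opnorm2 Sh * norm ((transpose X ** P ** E) $ j)" for j
  proof -
    define x where "x = column j X"
    have r1: "(transpose X ** E) $ j = transpose E *v x" unfolding x_def by (rule row_transpose_mult)
    have "transpose X ** P = transpose (P ** X)" using Pt by (simp add: matrix_transpose_mul)
    then have r2: "(transpose X ** P ** E) $ j = transpose E *v (P *v x)"
      unfolding x_def by (simp add: row_transpose_mult column_mult)
    have xx: "Sh *v (P *v x) = x" using SP by (simp add: matrix_vector_mul_assoc)
    show ?thesis unfolding r1 r2 opnorm2_def
      using seminorm_bound[OF Ssym SA[unfolded A_def], of "P *v x"] xx by simp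
  qed
  have c0: "opnorm2 Sh \<ge> 0" unfolding opnorm2_def by (rule onorm_pos_le) simp
  show ?thesis
    unfolding norm2inf_def E_def[symmetric] P_def[symmetric]
    by (rule Max_scale_le[OF rowbound c0])
qed

end
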